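(* Let $M$ be a smooth $n$-manifold with a torsion-free linear connection $\nabla$ and a symmetric $(0,2)$-tensor field $c$, and let $\overline{g}_{\nabla,c}$ be the modified Riemannian extension on $T^{\ast}M$. Let $\widetilde{\nabla}$ be the unique linear connection on $T^{\ast}M$ satisfying $\widetilde{\nabla}\,\overline{g}_{\nabla,c}=0$ whose torsion $\widetilde{T}$ is given in the adapted frame by $\widetilde{T}(E_i,E_j)=-p_sR_{ijr}^{\ \ \ s}E_{\overline{r}}$ and $\widetilde{T}(E_i,E_{\overline{j}})=\widetilde{T}(E_{\overline{i}},E_j)=\widetilde{T}(E_{\overline{i}},E_{\overline{j}})=0$. Then, with respect to the adapted frame, $$\widetilde{\nabla}_{E_{\overline{i}}}E_{\overline{j}}=0,\quad \widetilde{\nabla}_{E_{\overline{i}}}E_{j}=0,\quad \widetilde{\nabla}_{E_{i}}E_{\overline{j}}=-\Gamma^{j}_{ih}E_{\overline{h}},$$ $$\widetilde{\nabla}_{E_{i}}E_{j}=\Gamma^{h}_{ij}E_{h}+\tfrac12\left(\nabla_i c_{jh}+\nabla_j c_{ih}-\nabla_h c_{ij}\right)E_{\overline{h}}.$$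
   Context: Summation convention; indices $h,i,j,\dots$ range over $1,\dots,n$ and $\overline{i}=n+i$. $\Gamma^h_{ij}$ are the coefficients of $\nabla$ in local coordinates $(x^i)$ on $M$, i.e. $\nabla_{\partial_i}\partial_j=\Gamma^h_{ij}\partial_h$. The curvature is $R(X,Y)Z=\nabla_X\nabla_YZ-\nabla_Y\nabla_XZ-\nabla_{[X,Y]}Z$ with $R(\partial_i,\partial_j)\partial_k=R_{ijk}^{\ \ \ h}\partial_h$. $c_{ij}$ are the components of $c$ and $\nabla_ic_{jk}$ those of $\nabla c$. On $T^{\ast}M$ use induced coordinates $(x^i,p_i)$, where $p_i$ are the components of a covector with respect to $dx^i$; write $\partial_{\overline{i}}=\partial/\partial p_i$. The adapted frame is $E_j=\partial_j+p_a\Gamma^a_{hj}\partial_{\overline{h}}$, $E_{\overline{j}}=\partial_{\overline{j}}$. The modified Riemannian extension $\overline{g}_{\nabla,c}$ is the pseudo-Riemannian metric on $T^{\ast}M$ given by $\overline{g}_{\nabla,c}(E_i,E_j)=c_{ij}$, $\overline{g}_{\nabla,c}(E_i,E_{\overline{j}})=\overline{g}_{\nabla,c}(E_{\overline{j}},E_i)=\delta_i^j$, $\overline{g}_{\nabla,c}(E_{\overline{i}},E_{\overline{j}})=0$. (A metric linear connection with prescribed torsion is unique.) *)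

theory Defs
  imports "HOL-Analysis.Analysis"
begin

text \<open>A coordinate chart of M is an open set U of real^'n
  (n = CARD('n)).  T*M over U is {z :: real^('n+'n). base z \<in> U}, where
  z $ Inl i = x^i and z $ Inr i = p_i; so index Inl i is i and Inr i is the barred index.
  Vector fields are given by their components in the coordinate frame (d_A).\<close>

definition pd :: "'i::finite \<Rightarrow> (real^'i \<Rightarrow> real) \<Rightarrow> real^'i \<Rightarrow> real" where
  "pd A f z = deriv (\<lambda>t. f (z + t *\<^sub>R axis A 1)) 0"

fun iter_pd :: "'i::finite list \<Rightarrow> (real^'i \<Rightarrow> real) \<Rightarrow> real^'i \<Rightarrow> real" where
  "iter_pd [] f = f"
| "iter_pd (A # as) f = pd A (iter_pd as f)"

definition smooth_on :: "(real^'i::finite) set \<Rightarrow> (real^'i \<Rightarrow> real) \<Rightarrow> bool" where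
  "smooth_on S f \<longleftrightarrow> (\<forall>as. continuous_on S (iter_pd as f) \<and>
                          (\<forall>z\<in>S. iter_pd as f differentiable (at z)))"

definition base :: "real^('n::finite + 'n) \<Rightarrow> real^'n" where
  "base z = (\<chi> i. z $ Inl i)"

definition fib :: "real^('n::finite + 'n) \<Rightarrow> real^'n" where
  "fib z = (\<chi> i. z $ Inr i)"

definition cotangent_region :: "(real^'n::finite) set \<Rightarrow> (real^('n + 'n)) set" where
  "cotangent_region U = {z. base z \<in> U}"

subsection \<open>Base manifold quantities (Gam h i j = Gamma^h_ij, c i j = c_ij)\<close>

definition curv :: "('n::finite \<Rightarrow> 'n \<Rightarrow> 'n \<Rightarrow> real^'n \<Rightarrow> real)
     \<Rightarrow> 'n \<Rightarrow> 'n \<Rightarrow> 'n \<Rightarrow> 'n \<Rightarrow> real^'n \<Rightarrow> real" where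
  \<comment> \<open>curv Gam i j k h x = R_ijk^h with R(d_i,d_j)d_k = R_ijk^h d_h\<close>
  "curv Gam i j k h x = pd i (Gam h j k) x - pd j (Gam h i k) x
     + (\<Sum>a\<in>UNIV. Gam h i a x * Gam a j k x - Gam h j a x * Gam a i k x)"

definition covc :: "('n::finite \<Rightarrow> 'n \<Rightarrow> 'n \<Rightarrow> real^'n \<Rightarrow> real)
     \<Rightarrow> ('n \<Rightarrow> 'n \<Rightarrow> real^'n \<Rightarrow> real) \<Rightarrow> 'n \<Rightarrow> 'n \<Rightarrow> 'n \<Rightarrow> real^'n \<Rightarrow> real" where
  \<comment> \<open>covc Gam c i j k x = nabla_i c_jk\<close>
  "covc Gam c i j k x = pd i (c j k) x
     - (\<Sum>a\<in>UNIV. Gam a i j x * c a k x + Gam a i k x * c j a x)"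

definition Efr :: "('n::finite \<Rightarrow> 'n \<Rightarrow> 'n \<Rightarrow> real^'n \<Rightarrow> real) \<Rightarrow> 'n
     \<Rightarrow> real^('n + 'n) \<Rightarrow> real^('n + 'n)" where
  "Efr Gam j z = axis (Inl j) 1
     + (\<Sum>h\<in>UNIV. (\<Sum>a\<in>UNIV. fib z $ a * Gam a h j (base z)) *\<^sub>R axis (Inr h) 1)"

definition Ebar :: "'n::finite \<Rightarrow> real^('n + 'n) \<Rightarrow> real^('n + 'n)" where
  "Ebar j z = axis (Inr j) 1"

definition frame_coords :: "('n::finite \<Rightarrow> 'n \<Rightarrow> 'n \<Rightarrow> real^'n \<Rightarrow> real)
     \<Rightarrow> real^('n + 'n) \<Rightarrow> real^('n + 'n) \<Rightarrow> real^('n + 'n)" where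
  \<comment> \<open>components of a tangent vector u at z w.r.t. (E_j, E_jbar): u = U^j E_j + U^jbar E_jbar\<close>
  "frame_coords Gam z u = (\<chi> A. case A of Inl j \<Rightarrow> u $ Inl j
     | Inr h \<Rightarrow> u $ Inr h - (\<Sum>j\<in>UNIV. (\<Sum>a\<in>UNIV. fib z $ a * Gam a h j (base z)) * u $ Inl j))"

definition gext :: "('n::finite \<Rightarrow> 'n \<Rightarrow> 'n \<Rightarrow> real^'n \<Rightarrow> real)
     \<Rightarrow> ('n \<Rightarrow> 'n \<Rightarrow> real^'n \<Rightarrow> real)
     \<Rightarrow> real^('n + 'n) \<Rightarrow> real^('n + 'n) \<Rightarrow> real^('n + 'n) \<Rightarrow> real" where
  \<comment> \<open>modified Riemannian extension: g(E_i,E_j)=c_ij, g(E_i,E_jbar)=delta, g(E_ibar,E_jbar)=0\<close>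
  "gext Gam c z u v = (let U = frame_coords Gam z u; V = frame_coords Gam z v in
     (\<Sum>i\<in>UNIV. \<Sum>j\<in>UNIV. c i j (base z) * U $ Inl i * V $ Inl j)
     + (\<Sum>i\<in>UNIV. U $ Inl i * V $ Inr i + U $ Inr i * V $ Inl i))"

subsection \<open>Linear connections on T*U via coefficients: nabla_{d_A} d_B = Gt C A B d_C\<close>

definition vder :: "(real^'k::finite \<Rightarrow> real^'k) \<Rightarrow> (real^'k \<Rightarrow> real) \<Rightarrow> real^'k \<Rightarrow> real" where
  "vder X f z = (\<Sum>A\<in>UNIV. X z $ A * pd A f z)"

definition cov :: "('k::finite \<Rightarrow> 'k \<Rightarrow> 'k \<Rightarrow> real^'k \<Rightarrow> real)
     \<Rightarrow> (real^'k \<Rightarrow> real^'k) \<Rightarrow> (real^'k \<Rightarrow> real^'k) \<Rightarrow> real^'k \<Rightarrow> real^'k" where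
  "cov Gt X Y z = (\<chi> C. vder X (\<lambda>w. Y w $ C) z
     + (\<Sum>A\<in>UNIV. \<Sum>B\<in>UNIV. Gt C A B z * X z $ A * Y z $ B))"

definition lie :: "(real^'k::finite \<Rightarrow> real^'k) \<Rightarrow> (real^'k \<Rightarrow> real^'k) \<Rightarrow> real^'k \<Rightarrow> real^'k" where
  "lie X Y z = (\<chi> C. vder X (\<lambda>w. Y w $ C) z - vder Y (\<lambda>w. X w $ C) z)"

definition torsion :: "('k::finite \<Rightarrow> 'k \<Rightarrow> 'k \<Rightarrow> real^'k \<Rightarrow> real)
     \<Rightarrow> (real^'k \<Rightarrow> real^'k) \<Rightarrow> (real^'k \<Rightarrow> real^'k) \<Rightarrow> real^'k \<Rightarrow> real^'k" where
  "torsion Gt X Y z = cov Gt X Y z - cov Gt Y X z - lie X Y z"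

definition coordfield :: "'k::finite \<Rightarrow> real^'k \<Rightarrow> real^'k" where
  "coordfield A z = axis A 1"

definition metric_conn_on :: "(real^'k::finite) set \<Rightarrow> ('k \<Rightarrow> 'k \<Rightarrow> 'k \<Rightarrow> real^'k \<Rightarrow> real)
     \<Rightarrow> (real^'k \<Rightarrow> real^'k \<Rightarrow> real^'k \<Rightarrow> real) \<Rightarrow> bool" where
  "metric_conn_on S Gt g \<longleftrightarrow> (\<forall>z\<in>S. \<forall>A B C.
     pd A (\<lambda>w. g w (axis B 1) (axis C 1)) z
       = g z (cov Gt (coordfield A) (coordfield B) z) (axis C 1)
       + g z (axis B 1) (cov Gt (coordfield A) (coordfield C) z))"

end

theory Submission
  imports Defs
begin


lemma sum_UNIV_plus:
  fixes F :: "('a::finite + 'b::finite) \<Rightarrow> 'c::comm_monoid_add"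
  shows "(\<Sum>A\<in>UNIV. F A) = (\<Sum>i\<in>UNIV. F (Inl i)) + (\<Sum>i\<in>UNIV. F (Inr i))"
proof -
  have "(\<Sum>A\<in>UNIV. F A) = (\<Sum>A\<in>UNIV <+> UNIV. F A)" by simp
  also have "\<dots> = (\<Sum>i\<in>UNIV. F (Inl i)) + (\<Sum>i\<in>UNIV. F (Inr i))"
    by (subst sum.Plus) (auto simp: comp_def)
  finally show ?thesis .
qed

lemma axis_comp: "axis A (1::real) $ B = (if B = A then 1 else 0)"
  by (simp add: axis_def)

definition NN :: "('n::finite \<Rightarrow> 'n \<Rightarrow> 'n \<Rightarrow> real^'n \<Rightarrow> real) \<Rightarrow> real^('n + 'n) \<Rightarrow> 'n \<Rightarrow> 'n \<Rightarrow> real" where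
  "NN Gam z h j = (\<Sum>a\<in>UNIV. fib z $ a * Gam a h j (base z))"

lemma Efr_Inl: "Efr Gam j z $ Inl k = (if k = j then 1 else 0)"
  by (simp add: Efr_def axis_comp)
lemma Efr_Inr: "Efr Gam j z $ Inr h = NN Gam z h j"
  by (simp add: Efr_def axis_comp NN_def if_distrib cong: if_cong)
lemma Ebar_comp: "Ebar j z $ A = (if A = Inr j then 1 else 0)"
  by (simp add: Ebar_def axis_comp)

lemma gext_expand: "gext Gam c z u v =
   (\<Sum>i\<in>UNIV. \<Sum>j\<in>UNIV. c i j (base z) * u $ Inl i * v $ Inl j)
 + (\<Sum>i\<in>UNIV. u $ Inl i * (v $ Inr i - (\<Sum>j\<in>UNIV. NN Gam z i j * v $ Inl j))
     + (u $ Inr i - (\<Sum>j\<in>UNIV. NN Gam z i j * u $ Inl j)) * v $ Inl i)"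
  by (simp add: gext_def frame_coords_def Let_def NN_def)

lemma sum_delta_mult [simp]:
  fixes f :: "'a::finite \<Rightarrow> real"
  shows
  "(\<Sum>i\<in>UNIV. f i * (if i = d then 1 else 0)) = (f d :: real)"
  "(\<Sum>i\<in>UNIV. (if i = d then 1 else 0) * f i) = (f d :: real)"
proof -
  have a: "\<And>i. f i * (if i = d then 1 else (0::real)) = (if i = d then f i else 0)"
       "\<And>i. (if i = d then 1 else (0::real)) * f i = (if i = d then f i else 0)" by simp_all
  show "(\<Sum>i\<in>UNIV. f i * (if i = d then 1 else 0)) = (f d :: real)" unfolding a by simp
  show "(\<Sum>i\<in>UNIV. (if i = d then 1 else 0) * f i) = (f d :: real)" unfolding a by simp
qed

lemma gext_Inr: "gext Gam c z u (axis (Inr d) 1) = u $ Inl d"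
  by (simp add: gext_expand axis_comp)

lemma gext_Inl: "gext Gam c z u (axis (Inl d) 1) =
   (\<Sum>i\<in>UNIV. c i d (base z) * u $ Inl i) + u $ Inr d
   - (\<Sum>i\<in>UNIV. u $ Inl i * NN Gam z i d) - (\<Sum>j\<in>UNIV. NN Gam z d j * u $ Inl j)"
  by (simp add: gext_expand axis_comp ring_distribs sum.distrib sum_subtractf)

lemma sum_delta_mult' [simp]:
  fixes f :: "'a::finite \<Rightarrow> real"
  shows "(\<Sum>i\<in>UNIV. f i * (if d = i then 1 else 0)) = (f d :: real)"
  "(\<Sum>i\<in>UNIV. (if d = i then 1 else 0) * f i) = (f d :: real)"
proof -
  have a: "\<And>i. f i * (if d = i then 1 else (0::real)) = (if i = d then f i else 0)"
       "\<And>i. (if d = i then 1 else (0::real)) * f i = (if i = d then f i else 0)" by auto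
  show "(\<Sum>i\<in>UNIV. f i * (if d = i then 1 else 0)) = (f d :: real)" unfolding a by simp
  show "(\<Sum>i\<in>UNIV. (if d = i then 1 else 0) * f i) = (f d :: real)" unfolding a by simp
qed

lemma phi_lin: "gext Gam c z u (axis D 1) = (\<Sum>C\<in>UNIV. u $ C * gext Gam c z (axis C 1) (axis D 1))"
proof (cases D)
  case (Inl d)
  show ?thesis unfolding Inl gext_Inl sum_UNIV_plus[of "\<lambda>C. u $ C * _ C"]
    by (simp add: axis_comp ring_distribs sum_subtractf sum.distrib sum_distrib_left mult_ac)
next
  case (Inr d)
  show ?thesis unfolding Inr gext_Inr sum_UNIV_plus[of "\<lambda>C. u $ C * _ C"]
    by (simp add: axis_comp)
qed

lemma gc_LL: "gext Gam c z (axis (Inl i) 1) (axis (Inl j) 1) = c i j (base z) - NN Gam z i j - NN Gam z j i"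
  by (simp add: gext_Inl axis_comp)
lemma gc_RL: "gext Gam c z (axis (Inr i) 1) (axis (Inl j) 1) = (if i = j then 1 else 0)"
  by (simp add: gext_Inl axis_comp)
lemma gc_LR: "gext Gam c z (axis (Inl i) 1) (axis (Inr j) 1) = (if i = j then 1 else 0)"
  by (simp add: gext_Inr axis_comp)
lemma gc_RR: "gext Gam c z (axis (Inr i) 1) (axis (Inr j) 1) = 0"
  by (simp add: gext_Inr axis_comp)

lemma gext_sym:
  assumes "\<And>i j. c i j (base z) = c j i (base z)"
  shows "gext Gam c z u v = gext Gam c z v u"
proof -
  have "(\<Sum>i\<in>UNIV. \<Sum>j\<in>UNIV. c i j (base z) * u $ Inl i * v $ Inl j)
      = (\<Sum>i\<in>UNIV. \<Sum>j\<in>UNIV. c i j (base z) * v $ Inl i * u $ Inl j)"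
    by (subst sum.swap) (simp add: assms mult_ac)
  then show ?thesis unfolding gext_expand by (simp add: algebra_simps)
qed

lemma pd_const: "pd A (\<lambda>w. k) z = 0"
  by (simp add: pd_def)

lemma cov_coord: "cov Gt (coordfield A) (coordfield B) z = (\<chi> C. Gt C A B z)"
  by (simp add: cov_def vder_def coordfield_def axis_comp pd_const vec_eq_iff)

lemma torsion_comp: "torsion Gt X Y z $ C
   = (\<Sum>A\<in>UNIV. \<Sum>B\<in>UNIV. (Gt C A B z - Gt C B A z) * X z $ A * Y z $ B)"
proof -
  have "(\<Sum>A\<in>UNIV. \<Sum>B\<in>UNIV. Gt C A B z * Y z $ A * X z $ B)
      = (\<Sum>A\<in>UNIV. \<Sum>B\<in>UNIV. Gt C B A z * X z $ A * Y z $ B)"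
    by (subst sum.swap) (simp add: mult_ac)
  then show ?thesis
    by (simp add: torsion_def cov_def lie_def algebra_simps sum_subtractf)
qed

lemma base_Inl: "base (z + t *\<^sub>R axis (Inl k) 1) = base z + t *\<^sub>R axis k 1"
  by (simp add: base_def vec_eq_iff axis_comp)
lemma fib_Inl: "fib (z + t *\<^sub>R axis (Inl k) 1) = fib z"
  by (simp add: fib_def vec_eq_iff axis_comp)
lemma base_Inr: "base (z + t *\<^sub>R axis (Inr k) 1) = base z"
  by (simp add: base_def vec_eq_iff axis_comp)
lemma fib_Inr: "fib (z + t *\<^sub>R axis (Inr k) 1) = fib z + t *\<^sub>R axis k 1"
  by (simp add: fib_def vec_eq_iff axis_comp)

lemma line_deriv:
  assumes "smooth_on U f" "x \<in> U"
  shows "((\<lambda>t. f (x + t *\<^sub>R axis k 1)) has_real_derivative pd k f x) (at 0)"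
proof -
  have d: "f differentiable (at x)" using assms unfolding smooth_on_def
    by (metis iter_pd.simps(1))
  have "(\<lambda>t. f (x + t *\<^sub>R axis k 1)) differentiable (at 0)"
  proof -
    have l: "(\<lambda>t::real. x + t *\<^sub>R axis k 1) differentiable (at 0)"
      by (intro derivative_intros)
    have "(f \<circ> (\<lambda>t::real. x + t *\<^sub>R axis k 1)) differentiable (at 0)"
      by (rule differentiable_chain_at[OF l]) (simp add: d)
    then show ?thesis by (simp add: comp_def)
  qed
  then show ?thesis unfolding pd_def
    using DERIV_deriv_iff_real_differentiable by blast
qed

lemma pd_sym_open:
  assumes "open U" "x \<in> U" "smooth_on U f" "\<And>y. y \<in> U \<Longrightarrow> f y = g y"
  shows "pd k g x = pd k f x"
proof -
  have ev: "eventually (\<lambda>t. x + t *\<^sub>R axis k 1 \<in> U) (nhds (0::real))"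
  proof (rule topological_tendstoD[OF _ assms(1)])
    have "((\<lambda>t::real. x + t *\<^sub>R axis k 1) \<longlongrightarrow> x + 0 *\<^sub>R axis k 1) (nhds (0::real))"
      by (intro tendsto_intros filterlim_ident)
    then show "((\<lambda>t. x + t *\<^sub>R axis k 1) \<longlongrightarrow> x) (nhds (0::real))" by simp
  qed (simp add: assms)
  have "((\<lambda>t. g (x + t *\<^sub>R axis k 1)) has_real_derivative pd k f x) (at 0)"
    using line_deriv[OF assms(3,2)]
    by (subst DERIV_cong_ev[OF refl _ refl, where g="\<lambda>t. f (x + t *\<^sub>R axis k 1)"])
      (auto intro: eventually_mono[OF ev] simp: assms(4))
  then show ?thesis unfolding pd_def by (rule DERIV_imp_deriv)
qed

lemma sum_Ebar: "(\<Sum>A\<in>UNIV. F A * Ebar i z $ A) = (F (Inr i) :: real)"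
  "(\<Sum>A\<in>UNIV. Ebar i z $ A * F A) = (F (Inr i) :: real)"
  by (simp_all add: sum_UNIV_plus Ebar_comp)
lemma sum_Efr: "(\<Sum>A\<in>UNIV. F A * Efr Gam j z $ A) = F (Inl j) + (\<Sum>h\<in>UNIV. F (Inr h) * NN Gam z h j)"
  "(\<Sum>A\<in>UNIV. Efr Gam j z $ A * F A) = F (Inl j) + (\<Sum>h\<in>UNIV. NN Gam z h j * F (Inr h))"
  by (simp_all add: sum_UNIV_plus Efr_Inl Efr_Inr)

lemma torsion_comp2: "torsion Gt X Y z $ C
   = (\<Sum>A\<in>UNIV. X z $ A * (\<Sum>B\<in>UNIV. Y z $ B * (Gt C A B z - Gt C B A z)))"
  unfolding torsion_comp by (simp add: sum_distrib_left mult_ac)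

lemma D_NN_Inl:
  assumes "\<And>a. smooth_on U (Gam a h j)" "base z \<in> U"
  shows "((\<lambda>t. NN Gam (z + t *\<^sub>R axis (Inl k) 1) h j) has_real_derivative
           (\<Sum>a\<in>UNIV. fib z $ a * pd k (Gam a h j) (base z))) (at 0)"
  unfolding NN_def base_Inl fib_Inl
  by (intro DERIV_sum DERIV_cmult line_deriv[where U=U] assms)

lemma D_NN_Inr:
  shows "((\<lambda>t. NN Gam (z + t *\<^sub>R axis (Inr k) 1) h j) has_real_derivative
           Gam k h j (base z)) (at 0)"
proof -
  have "((\<lambda>t. NN Gam (z + t *\<^sub>R axis (Inr k) 1) h j) has_real_derivative
           (\<Sum>a\<in>UNIV. (if a = k then 1 else 0) * Gam a h j (base z))) (at 0)"
    unfolding NN_def base_Inr fib_Inr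
    by (intro DERIV_sum) (auto intro!: derivative_eq_intros simp: axis_comp)
  then show ?thesis by simp
qed

lemma D_c_Inl:
  assumes "smooth_on U f" "base z \<in> U"
  shows "((\<lambda>t. f (base (z + t *\<^sub>R axis (Inl k) 1))) has_real_derivative pd k f (base z)) (at 0)"
  unfolding base_Inl by (rule line_deriv[OF assms])

lemma D_c_Inr:
  shows "((\<lambda>t. f (base (z + t *\<^sub>R axis (Inr k) 1))) has_real_derivative 0) (at 0)"
  unfolding base_Inr by simp



definition SPd where "SPd Gam z u v w = (\<Sum>s\<in>UNIV. fib z $ s * pd u (Gam s v w) (base z))"
definition SQ where "SQ Gam z u v w = (\<Sum>s\<in>UNIV. \<Sum>a\<in>UNIV. fib z $ s * Gam s u a (base z) * Gam a v w (base z))"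
definition SC where "SC Gam c z u v w = (\<Sum>a\<in>UNIV. Gam a u v (base z) * c a w (base z))"

definition LL where "LL Gam c Gt A B D z = gext Gam c z (\<chi> C. Gt C A B z) (axis D 1)"
definition dg where "dg Gam c A B D z = pd A (\<lambda>w. gext Gam c w (axis B 1) (axis D 1)) z"
definition tau where "tau Gam c Gt A B D z = gext Gam c z (\<chi> C. Gt C A B z - Gt C B A z) (axis D 1)"

context
  fixes U :: "(real^'n::finite) set"
    and Gam :: "'n \<Rightarrow> 'n \<Rightarrow> 'n \<Rightarrow> real^'n \<Rightarrow> real"
    and c :: "'n \<Rightarrow> 'n \<Rightarrow> real^'n \<Rightarrow> real"
    and Gt :: "('n + 'n) \<Rightarrow> ('n + 'n) \<Rightarrow> ('n + 'n) \<Rightarrow> real^('n + 'n) \<Rightarrow> real"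
  assumes U_open: "open U"
    and Gam_smooth: "\<And>h i j. smooth_on U (Gam h i j)"
    and torsion_free: "\<And>h i j x. x \<in> U \<Longrightarrow> Gam h i j x = Gam h j i x"
    and c_smooth: "\<And>i j. smooth_on U (c i j)"
    and c_sym: "\<And>i j x. x \<in> U \<Longrightarrow> c i j x = c j i x"
    and metric: "metric_conn_on (cotangent_region U) Gt (gext Gam c)"
    and tor_EE: "\<And>i j z. z \<in> cotangent_region U \<Longrightarrow>
        torsion Gt (Efr Gam i) (Efr Gam j) z
          = (\<Sum>r\<in>UNIV. (- (\<Sum>s\<in>UNIV. fib z $ s * curv Gam i j r s (base z))) *\<^sub>R Ebar r z)"
    and tor_EbE: "\<And>i j z. z \<in> cotangent_region U \<Longrightarrow> torsion Gt (Ebar i) (Efr Gam j) z = 0"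
    and tor_EbEb: "\<And>i j z. z \<in> cotangent_region U \<Longrightarrow> torsion Gt (Ebar i) (Ebar j) z = 0"
begin

lemma xU: "z \<in> cotangent_region U \<Longrightarrow> base z \<in> U" by (simp add: cotangent_region_def)

lemma metricL: assumes "z \<in> cotangent_region U"
  shows "dg Gam c A B D z = LL Gam c Gt A B D z + LL Gam c Gt A D B z"
proof -
  have s: "\<And>i j. c i j (base z) = c j i (base z)" using c_sym xU[OF assms] by blast
  show ?thesis using metric assms unfolding metric_conn_on_def dg_def LL_def cov_coord
    using gext_sym[where c=c and z=z, OF s] by metis
qed

lemma tauL: "tau Gam c Gt A B D z = LL Gam c Gt A B D z - LL Gam c Gt B A D z"
  unfolding tau_def LL_def
  by (subst (1 2 3) phi_lin) (simp add: sum_subtractf algebra_simps)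

lemma koszul: assumes "z \<in> cotangent_region U"
  shows "2 * LL Gam c Gt A B D z = dg Gam c A B D z + dg Gam c B A D z - dg Gam c D A B z
     + tau Gam c Gt A B D z - tau Gam c Gt A D B z - tau Gam c Gt B D A z"
  using metricL[OF assms, of A B D] metricL[OF assms, of B A D] metricL[OF assms, of D A B]
    tauL[of A B D z] tauL[of A D B z] tauL[of B D A z] by linarith

lemma dg_LLL: assumes "z \<in> cotangent_region U"
  shows "dg Gam c (Inl k) (Inl i) (Inl j) z = pd k (c i j) (base z)
     - (\<Sum>a\<in>UNIV. fib z $ a * pd k (Gam a i j) (base z))
     - (\<Sum>a\<in>UNIV. fib z $ a * pd k (Gam a j i) (base z))"
  unfolding dg_def gc_LL pd_def[of "Inl k"]
  by (intro DERIV_imp_deriv DERIV_diff D_c_Inl[where U=U] D_NN_Inl[where U=U]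
       c_smooth Gam_smooth xU assms)

lemma dg_RLL: "dg Gam c (Inr k) (Inl i) (Inl j) z = - Gam k i j (base z) - Gam k j i (base z)"
proof -
  have "((\<lambda>t. c i j (base (z + t *\<^sub>R axis (Inr k) 1)) - NN Gam (z + t *\<^sub>R axis (Inr k) 1) i j
     - NN Gam (z + t *\<^sub>R axis (Inr k) 1) j i) has_real_derivative 0 - Gam k i j (base z) - Gam k j i (base z)) (at 0)"
    by (intro DERIV_diff D_c_Inr D_NN_Inr)
  then show ?thesis unfolding dg_def gc_LL pd_def by (simp add: DERIV_imp_deriv)
qed

lemma dg_zero: "dg Gam c A (Inr i) D z = 0" "dg Gam c A B (Inr j) z = 0"
proof -
  show "dg Gam c A (Inr i) D z = 0"
    by (cases D) (simp_all add: dg_def gc_RL gc_RR pd_const)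
  show "dg Gam c A B (Inr j) z = 0"
    by (cases B) (simp_all add: dg_def gc_LR gc_RR pd_const)
qed

lemma T_RR: assumes "z \<in> cotangent_region U"
  shows "Gt C (Inr i) (Inr j) z = Gt C (Inr j) (Inr i) z"
proof -
  have "torsion Gt (Ebar i) (Ebar j) z $ C = 0" using tor_EbEb[OF assms] by simp
  then show ?thesis unfolding torsion_comp2 by (simp add: sum_Ebar)
qed

lemma T_RL: assumes "z \<in> cotangent_region U"
  shows "Gt C (Inr i) (Inl j) z = Gt C (Inl j) (Inr i) z"
proof -
  have "torsion Gt (Ebar i) (Efr Gam j) z $ C = 0" using tor_EbE[OF assms] by simp
  then show ?thesis unfolding torsion_comp2 by (simp add: sum_Ebar sum_Efr T_RR[OF assms])
qed

lemma T_LL: assumes "z \<in> cotangent_region U"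
  shows "Gt C (Inl i) (Inl j) z - Gt C (Inl j) (Inl i) z
     = (case C of Inl _ \<Rightarrow> 0 | Inr r \<Rightarrow> - (\<Sum>s\<in>UNIV. fib z $ s * curv Gam i j r s (base z)))"
proof -
  have "torsion Gt (Efr Gam i) (Efr Gam j) z $ C = 
     (\<Sum>r\<in>UNIV. (- (\<Sum>s\<in>UNIV. fib z $ s * curv Gam i j r s (base z))) *\<^sub>R Ebar r z) $ C"
    using tor_EE[OF assms] by simp
  then show ?thesis unfolding torsion_comp2
    by (cases C) (simp_all add: sum_Ebar sum_Efr T_RR[OF assms] T_RL[OF assms] Ebar_comp sum_negf)
qed

lemma gext_zero: "gext Gam c z 0 v = 0"
  by (simp add: gext_expand)

lemma tau_R: assumes "z \<in> cotangent_region U" shows "tau Gam c Gt (Inr i) B D z = 0"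
proof -
  have "(\<chi> C. Gt C (Inr i) B z - Gt C B (Inr i) z) = 0"
    by (cases B) (simp_all add: vec_eq_iff T_RR[OF assms] T_RL[OF assms])
  then show ?thesis unfolding tau_def by (simp add: gext_zero)
qed

lemma tau_LR: assumes "z \<in> cotangent_region U" shows "tau Gam c Gt (Inl i) (Inr j) D z = 0"
proof -
  have "(\<chi> C. Gt C (Inl i) (Inr j) z - Gt C (Inr j) (Inl i) z) = 0"
    by (simp add: vec_eq_iff T_RL[OF assms])
  then show ?thesis unfolding tau_def by (simp add: gext_zero)
qed

lemma tau_LLR: assumes "z \<in> cotangent_region U" shows "tau Gam c Gt (Inl i) (Inl j) (Inr d) z = 0"
  unfolding tau_def gext_Inr using T_LL[OF assms, of "Inl d"] by simp

lemma tau_LLL: assumes "z \<in> cotangent_region U"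
  shows "tau Gam c Gt (Inl i) (Inl j) (Inl d) z = - (\<Sum>s\<in>UNIV. fib z $ s * curv Gam i j d s (base z))"
  unfolding tau_def gext_Inl using T_LL[OF assms, of "Inl _"] T_LL[OF assms, of "Inr d"] by simp

lemmas tau_simps = tau_R tau_LR tau_LLR tau_LLL
lemmas dg_simps = dg_LLL dg_RLL dg_zero

lemma L_RR: assumes "z \<in> cotangent_region U" shows "LL Gam c Gt (Inr i) (Inr j) D z = 0"
  using koszul[OF assms, of "Inr i" "Inr j" D]
  by (cases D) (simp_all add: tau_simps[OF assms] dg_simps)

lemma L_RLL: assumes "z \<in> cotangent_region U" shows "LL Gam c Gt (Inr i) (Inl j) (Inl k) z = - Gam i j k (base z)"
  using koszul[OF assms, of "Inr i" "Inl j" "Inl k"] torsion_free[OF xU[OF assms], of i j k]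
  by (simp add: tau_simps[OF assms] dg_simps)

lemma L_RLR: assumes "z \<in> cotangent_region U" shows "LL Gam c Gt (Inr i) (Inl j) (Inr k) z = 0"
  using koszul[OF assms, of "Inr i" "Inl j" "Inr k"]
  by (simp add: tau_simps[OF assms] dg_simps)

lemma L_LRL: assumes "z \<in> cotangent_region U" shows "LL Gam c Gt (Inl i) (Inr j) (Inl k) z = - Gam j i k (base z)"
  using koszul[OF assms, of "Inl i" "Inr j" "Inl k"] torsion_free[OF xU[OF assms], of j i k]
  by (simp add: tau_simps[OF assms] dg_simps)

lemma L_LRR: assumes "z \<in> cotangent_region U" shows "LL Gam c Gt (Inl i) (Inr j) (Inr k) z = 0"
  using koszul[OF assms, of "Inl i" "Inr j" "Inr k"]
  by (simp add: tau_simps[OF assms] dg_simps)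

lemma L_LLR: assumes "z \<in> cotangent_region U" shows "LL Gam c Gt (Inl i) (Inl j) (Inr k) z = Gam k i j (base z)"
  using koszul[OF assms, of "Inl i" "Inl j" "Inr k"] torsion_free[OF xU[OF assms], of k i j]
  by (simp add: tau_simps[OF assms] dg_simps)

lemma pd_NN_Inl: assumes "z \<in> cotangent_region U"
  shows "pd (Inl k) (\<lambda>w. NN Gam w h j) z = (\<Sum>a\<in>UNIV. fib z $ a * pd k (Gam a h j) (base z))"
  unfolding pd_def[of "Inl k"]
  by (intro DERIV_imp_deriv D_NN_Inl[where U=U] Gam_smooth xU assms)

lemma pd_NN_Inr: "pd (Inr k) (\<lambda>w. NN Gam w h j) z = Gam k h j (base z)"
  unfolding pd_def[of "Inr k"] by (intro DERIV_imp_deriv D_NN_Inr)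

lemma vder_Ebar_const: "vder X (\<lambda>w. Ebar j w $ C) z = 0"
  by (simp add: vder_def Ebar_comp pd_const)
lemma vder_Efr_Inl: "vder X (\<lambda>w. Efr Gam j w $ Inl k) z = 0"
  by (simp add: vder_def Efr_Inl pd_const)
lemma vder_Ebar_NN: "vder (Ebar i) (\<lambda>w. Efr Gam j w $ Inr h) z = Gam i h j (base z)"
  by (simp add: vder_def Efr_Inr sum_Ebar pd_NN_Inr)
lemma vder_Efr_NN: assumes "z \<in> cotangent_region U"
  shows "vder (Efr Gam i) (\<lambda>w. Efr Gam j w $ Inr h) z
    = (\<Sum>a\<in>UNIV. fib z $ a * pd i (Gam a h j) (base z)) + (\<Sum>m\<in>UNIV. NN Gam z m i * Gam m h j (base z))"
  by (simp add: vder_def Efr_Inr sum_Efr pd_NN_Inr pd_NN_Inl[OF assms])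

lemma phi_cov: "gext Gam c z (cov Gt X Y z) (axis D 1)
  = (\<Sum>C\<in>UNIV. vder X (\<lambda>w. Y w $ C) z * gext Gam c z (axis C 1) (axis D 1))
  + (\<Sum>A\<in>UNIV. X z $ A * (\<Sum>B\<in>UNIV. Y z $ B * LL Gam c Gt A B D z))"
proof -
  let ?g = "\<lambda>C. gext Gam c z (axis C 1) (axis D 1)"
  have "(\<Sum>C\<in>UNIV. (\<Sum>A\<in>UNIV. \<Sum>B\<in>UNIV. Gt C A B z * X z $ A * Y z $ B) * ?g C)
      = (\<Sum>C\<in>UNIV. \<Sum>A\<in>UNIV. \<Sum>B\<in>UNIV. Gt C A B z * X z $ A * Y z $ B * ?g C)"
    by (simp add: sum_distrib_right)
  also have "\<dots> = (\<Sum>A\<in>UNIV. \<Sum>C\<in>UNIV. \<Sum>B\<in>UNIV. Gt C A B z * X z $ A * Y z $ B * ?g C)"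
    by (rule sum.swap)
  also have "\<dots> = (\<Sum>A\<in>UNIV. \<Sum>B\<in>UNIV. \<Sum>C\<in>UNIV. Gt C A B z * X z $ A * Y z $ B * ?g C)"
    by (intro sum.cong refl sum.swap)
  also have "\<dots> = (\<Sum>A\<in>UNIV. X z $ A * (\<Sum>B\<in>UNIV. Y z $ B * LL Gam c Gt A B D z))"
    unfolding LL_def by (subst phi_lin) (simp add: sum_distrib_left mult_ac)
  finally have e: "(\<Sum>C\<in>UNIV. (\<Sum>A\<in>UNIV. \<Sum>B\<in>UNIV. Gt C A B z * X z $ A * Y z $ B) * ?g C)
     = (\<Sum>A\<in>UNIV. X z $ A * (\<Sum>B\<in>UNIV. Y z $ B * LL Gam c Gt A B D z))" .
  show ?thesis
    by (subst phi_lin) (simp add: cov_def ring_distribs sum.distrib e)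
qed

lemma nondeg:
  assumes "\<And>D. gext Gam c z u (axis D 1) = gext Gam c z v (axis D 1)"
  shows "u = v"
proof -
  have l: "u $ Inl d = v $ Inl d" for d using assms[of "Inr d"] by (simp add: gext_Inr)
  have "u $ Inr d = v $ Inr d" for d using assms[of "Inl d"] by (simp add: gext_Inl l)
  with l show ?thesis by (simp add: vec_eq_iff) (metis sum.exhaust)
qed

lemma claim1: assumes "z \<in> cotangent_region U" shows "cov Gt (Ebar i) (Ebar j) z = 0"
proof (rule nondeg)
  fix D show "gext Gam c z (cov Gt (Ebar i) (Ebar j) z) (axis D 1) = gext Gam c z 0 (axis D 1)"
    unfolding phi_cov by (simp add: vder_Ebar_const sum_Ebar L_RR[OF assms] gext_zero)
qed

lemma claim2: assumes "z \<in> cotangent_region U" shows "cov Gt (Ebar i) (Efr Gam j) z = 0"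
proof (rule nondeg)
  fix D show "gext Gam c z (cov Gt (Ebar i) (Efr Gam j) z) (axis D 1) = gext Gam c z 0 (axis D 1)"
    unfolding phi_cov sum_Ebar sum_Efr
    using torsion_free[OF xU[OF assms], of i]
    by (cases D) (simp_all add: sum_UNIV_plus vder_Efr_Inl vder_Ebar_NN sum_Ebar sum_Efr L_RR[OF assms]
       L_RLL[OF assms] L_RLR[OF assms] gext_zero gc_RL gc_RR gc_LR gc_LL)
qed

lemma claim3: assumes "z \<in> cotangent_region U"
  shows "cov Gt (Efr Gam i) (Ebar j) z = (\<Sum>h\<in>UNIV. (- Gam j i h (base z)) *\<^sub>R Ebar h z)"
proof (rule nondeg)
  fix D show "gext Gam c z (cov Gt (Efr Gam i) (Ebar j) z) (axis D 1)
     = gext Gam c z (\<Sum>h\<in>UNIV. (- Gam j i h (base z)) *\<^sub>R Ebar h z) (axis D 1)"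
    unfolding phi_cov sum_Ebar sum_Efr vder_Ebar_const
    by (cases D) (simp_all add: vder_Ebar_const sum_Ebar sum_Efr L_RR[OF assms]
       L_LRL[OF assms] L_LRR[OF assms] gext_Inl gext_Inr Ebar_comp sum_negf)
qed

lemma claim4_R: assumes "z \<in> cotangent_region U"
  shows "gext Gam c z (cov Gt (Efr Gam i) (Efr Gam j) z) (axis (Inr k) 1)
     = gext Gam c z ((\<Sum>h\<in>UNIV. Gam h i j (base z) *\<^sub>R Efr Gam h z)
        + (\<Sum>h\<in>UNIV. ((covc Gam c i j h (base z) + covc Gam c j i h (base z)
                        - covc Gam c h i j (base z)) / 2) *\<^sub>R Ebar h z)) (axis (Inr k) 1)"
  unfolding phi_cov sum_Efr sum_UNIV_plus vder_Efr_Inl vder_Efr_NN[OF assms]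
  by (simp add: sum_UNIV_plus vder_Efr_Inl gc_RL gc_RR gc_LR gc_LL L_LLR[OF assms]
       L_LRR[OF assms] L_RLR[OF assms] L_RR[OF assms] gext_Inr Efr_Inl Ebar_comp axis_comp)

lemma claim4_L_lhs: assumes "z \<in> cotangent_region U"
  shows "gext Gam c z (cov Gt (Efr Gam i) (Efr Gam j) z) (axis (Inl k) 1)
     = SPd Gam z i k j + (\<Sum>m\<in>UNIV. NN Gam z m i * Gam m k j (base z)) + LL Gam c Gt (Inl i) (Inl j) (Inl k) z
       - (\<Sum>h\<in>UNIV. NN Gam z h j * Gam h i k (base z)) - (\<Sum>m\<in>UNIV. NN Gam z m i * Gam m j k (base z))"
  unfolding phi_cov sum_Efr sum_UNIV_plus vder_Efr_Inl vder_Efr_NN[OF assms]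
  by (simp add: sum_UNIV_plus vder_Efr_Inl gc_RL gc_RR gc_LR gc_LL L_LRL[OF assms]
       L_RLL[OF assms] L_LRR[OF assms] L_RR[OF assms] SPd_def sum_negf)

lemma claim4_L_rhs: 
  shows "gext Gam c z ((\<Sum>h\<in>UNIV. Gam h i j (base z) *\<^sub>R Efr Gam h z)
        + (\<Sum>h\<in>UNIV. ((covc Gam c i j h (base z) + covc Gam c j i h (base z)
                        - covc Gam c h i j (base z)) / 2) *\<^sub>R Ebar h z)) (axis (Inl k) 1)
     = SC Gam c z i j k + (covc Gam c i j k (base z) + covc Gam c j i k (base z)
                        - covc Gam c k i j (base z)) / 2 - (\<Sum>h\<in>UNIV. Gam h i j (base z) * NN Gam z h k)"
  by (simp add: gext_Inl Efr_Inl Efr_Inr Ebar_comp SC_def mult_ac sum_divide_distrib[symmetric])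

lemma NN_G: assumes "z \<in> cotangent_region U"
  shows "(\<Sum>m\<in>UNIV. NN Gam z m u * Gam m v w (base z)) = SQ Gam z u v w"
proof -
  have "(\<Sum>m\<in>UNIV. NN Gam z m u * Gam m v w (base z))
      = (\<Sum>m\<in>UNIV. \<Sum>s\<in>UNIV. fib z $ s * Gam s m u (base z) * Gam m v w (base z))"
    by (simp add: NN_def sum_distrib_right)
  also have "\<dots> = (\<Sum>s\<in>UNIV. \<Sum>m\<in>UNIV. fib z $ s * Gam s m u (base z) * Gam m v w (base z))"
    by (rule sum.swap)
  also have "\<dots> = SQ Gam z u v w" unfolding SQ_def
    by (intro sum.cong refl) (simp add: torsion_free[OF xU[OF assms], of _ _ u])
  finally show ?thesis .
qed

lemma G_NN: assumes "z \<in> cotangent_region U"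
  shows "(\<Sum>h\<in>UNIV. Gam h i j (base z) * NN Gam z h k) = SQ Gam z k i j"
  using NN_G[OF assms, of k i j] by (simp add: mult.commute)

lemma curv_sum: "(\<Sum>s\<in>UNIV. fib z $ s * curv Gam i j k s (base z))
   = SPd Gam z i j k - SPd Gam z j i k + SQ Gam z i j k - SQ Gam z j i k"
  by (simp add: curv_def SPd_def SQ_def ring_distribs sum.distrib sum_subtractf sum_distrib_left mult_ac)

lemma covc_exp: assumes "z \<in> cotangent_region U"
  shows "covc Gam c i j k (base z) = pd i (c j k) (base z) - SC Gam c z i j k - SC Gam c z i k j"
  by (simp add: covc_def SC_def sum.distrib c_sym[OF xU[OF assms], of j])

lemma SPd_sym: assumes "z \<in> cotangent_region U" shows "SPd Gam z u v w = SPd Gam z u w v"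
  unfolding SPd_def
  using pd_sym_open[OF U_open xU[OF assms] Gam_smooth torsion_free] by simp

lemma SQ_sym: assumes "z \<in> cotangent_region U" shows "SQ Gam z u v w = SQ Gam z u w v"
  unfolding SQ_def using torsion_free[OF xU[OF assms]] by simp

lemma SC_sym: assumes "z \<in> cotangent_region U" shows "SC Gam c z u v w = SC Gam c z v u w"
  unfolding SC_def using torsion_free[OF xU[OF assms]] by simp

lemma dg_LLL': assumes "z \<in> cotangent_region U"
  shows "dg Gam c (Inl k) (Inl i) (Inl j) z = pd k (c i j) (base z) - SPd Gam z k i j - SPd Gam z k j i"
  by (simp add: dg_LLL[OF assms] SPd_def)

lemma claim4_L: assumes "z \<in> cotangent_region U"
  shows "gext Gam c z (cov Gt (Efr Gam i) (Efr Gam j) z) (axis (Inl k) 1)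
     = gext Gam c z ((\<Sum>h\<in>UNIV. Gam h i j (base z) *\<^sub>R Efr Gam h z)
        + (\<Sum>h\<in>UNIV. ((covc Gam c i j h (base z) + covc Gam c j i h (base z)
                        - covc Gam c h i j (base z)) / 2) *\<^sub>R Ebar h z)) (axis (Inl k) 1)"
  unfolding claim4_L_lhs[OF assms] claim4_L_rhs NN_G[OF assms] G_NN[OF assms]
  using koszul[OF assms, of "Inl i" "Inl j" "Inl k"]
  unfolding dg_LLL'[OF assms] tau_LLL[OF assms] curv_sum covc_exp[OF assms]
  using SPd_sym[OF assms, of i k j] SPd_sym[OF assms, of j k i] SPd_sym[OF assms, of k j i]
    SQ_sym[OF assms, of i k j] SQ_sym[OF assms, of j k i] SQ_sym[OF assms, of k j i]
    SC_sym[OF assms, of j i k] SC_sym[OF assms, of k i j] SC_sym[OF assms, of k j i]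
  by (simp add: field_simps)

lemma claim4: assumes "z \<in> cotangent_region U"
  shows "cov Gt (Efr Gam i) (Efr Gam j) z
        = (\<Sum>h\<in>UNIV. Gam h i j (base z) *\<^sub>R Efr Gam h z)
        + (\<Sum>h\<in>UNIV. ((covc Gam c i j h (base z) + covc Gam c j i h (base z)
                        - covc Gam c h i j (base z)) / 2) *\<^sub>R Ebar h z)"
proof (rule nondeg)
  fix D show "gext Gam c z (cov Gt (Efr Gam i) (Efr Gam j) z) (axis D 1) = gext Gam c z ((\<Sum>h\<in>UNIV. Gam h i j (base z) *\<^sub>R Efr Gam h z)
        + (\<Sum>h\<in>UNIV. ((covc Gam c i j h (base z) + covc Gam c j i h (base z)
                        - covc Gam c h i j (base z)) / 2) *\<^sub>R Ebar h z)) (axis D 1)"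
    by (cases D) (simp only: claim4_L[OF assms] claim4_R[OF assms])+
qed

lemma main: "\<forall>z\<in>cotangent_region U. \<forall>i j.
      cov Gt (Ebar i) (Ebar j) z = 0
    \<and> cov Gt (Ebar i) (Efr Gam j) z = 0
    \<and> cov Gt (Efr Gam i) (Ebar j) z = (\<Sum>h\<in>UNIV. (- Gam j i h (base z)) *\<^sub>R Ebar h z)
    \<and> cov Gt (Efr Gam i) (Efr Gam j) z
        = (\<Sum>h\<in>UNIV. Gam h i j (base z) *\<^sub>R Efr Gam h z)
        + (\<Sum>h\<in>UNIV. ((covc Gam c i j h (base z) + covc Gam c j i h (base z)
                        - covc Gam c h i j (base z)) / 2) *\<^sub>R Ebar h z)"
  using claim1 claim2 claim3 claim4 by blast

end


theorem proposition2:
  fixes U :: "(real^'n::finite) set"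
    and Gam :: "'n \<Rightarrow> 'n \<Rightarrow> 'n \<Rightarrow> real^'n \<Rightarrow> real"
    and c :: "'n \<Rightarrow> 'n \<Rightarrow> real^'n \<Rightarrow> real"
    and Gt :: "('n + 'n) \<Rightarrow> ('n + 'n) \<Rightarrow> ('n + 'n) \<Rightarrow> real^('n + 'n) \<Rightarrow> real"
  assumes U_open: "open U"
    and Gam_smooth: "\<And>h i j. smooth_on U (Gam h i j)"
    and torsion_free: "\<And>h i j x. x \<in> U \<Longrightarrow> Gam h i j x = Gam h j i x"
    and c_smooth: "\<And>i j. smooth_on U (c i j)"
    and c_sym: "\<And>i j x. x \<in> U \<Longrightarrow> c i j x = c j i x"
    and Gt_smooth: "\<And>A B C. smooth_on (cotangent_region U) (Gt A B C)"
    and metric: "metric_conn_on (cotangent_region U) Gt (gext Gam c)"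
    and tor_EE: "\<And>i j z. z \<in> cotangent_region U \<Longrightarrow>
        torsion Gt (Efr Gam i) (Efr Gam j) z
          = (\<Sum>r\<in>UNIV. (- (\<Sum>s\<in>UNIV. fib z $ s * curv Gam i j r s (base z))) *\<^sub>R Ebar r z)"
    and tor_EEb: "\<And>i j z. z \<in> cotangent_region U \<Longrightarrow> torsion Gt (Efr Gam i) (Ebar j) z = 0"
    and tor_EbE: "\<And>i j z. z \<in> cotangent_region U \<Longrightarrow> torsion Gt (Ebar i) (Efr Gam j) z = 0"
    and tor_EbEb: "\<And>i j z. z \<in> cotangent_region U \<Longrightarrow> torsion Gt (Ebar i) (Ebar j) z = 0"
  shows "\<forall>z\<in>cotangent_region U. \<forall>i j.
      cov Gt (Ebar i) (Ebar j) z = 0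
    \<and> cov Gt (Ebar i) (Efr Gam j) z = 0
    \<and> cov Gt (Efr Gam i) (Ebar j) z = (\<Sum>h\<in>UNIV. (- Gam j i h (base z)) *\<^sub>R Ebar h z)
    \<and> cov Gt (Efr Gam i) (Efr Gam j) z
        = (\<Sum>h\<in>UNIV. Gam h i j (base z) *\<^sub>R Efr Gam h z)
        + (\<Sum>h\<in>UNIV. ((covc Gam c i j h (base z) + covc Gam c j i h (base z)
                        - covc Gam c h i j (base z)) / 2) *\<^sub>R Ebar h z)"
  using main[OF U_open Gam_smooth torsion_free c_smooth c_sym metric tor_EE tor_EbE tor_EbEb] .

end
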